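(* Let $M,N$ be weights of $\mathbb{R}^m,\mathbb{R}^n$, and let $A\in\mathbb{R}^{m\times n}$ with $MA=AN$ (i.e. $I\circ A=A\circ I$) and $\mathcal{R}(A\circ I)$ closed. Let $K\subseteq\mathbb{R}^n$ be a closed cone with $A^{[\dagger]}\circ A\circ K\subseteq K$. Put $$C=A\circ I\circ K,\qquad D=(A^{[\dagger]})^{[*]}\circ I\circ K^{[*]}.$$ Then the following are equivalent: (i) $D$ is acute; (ii) $(A^{[*]}\circ A)^{[\dagger]}\circ K^{[*]}\subseteq K+\mathcal{N}(A\circ I)$; (iii) $C$ is obtuse.
   Context: A weight is a real symmetric matrix $W$ with $W^2=I$. $\mathbb{R}^m$ and $\mathbb{R}^n$ carry weights $M\in\mathbb{R}^{m\times m}$ and $N\in\mathbb{R}^{n\times n}$, respectively. The indefinite inner product on the space with weight $W$ is $[x,y]=\langle x,Wy\rangle$. Indefinite matrix product: if $B$ has $p$ columns and $C'$ has $p$ rows (or is a vector in $\mathbb{R}^p$), $p\in\{m,n\}$, and $W$ is the weight of $\mathbb{R}^p$, then $B\circ C':=BWC'$. $I$ denotes an identity matrix of the appropriate size. Indefinite adjoint of $B\in\mathbb{R}^{p\times q}$: $B^{[*]}:=W_qB^TW_p$, where $W_p,W_q$ are the weights of $\mathbb{R}^p,\mathbb{R}^q$. Indefinite Moore–Penrose inverse: for $B\in\mathbb{R}^{p\times q}$, $B^{[\dagger]}$ is the unique $X\in\mathbb{R}^{q\times p}$ such that - $B\circ X\circ B=B$, - $X\circ B\circ X=X$, - $(B\circ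 X)^{[*]}=B\circ X$, - $(X\circ B)^{[*]}=X\circ B$. It equals $W_qB^\dagger W_p$. Range and null space: for a matrix $B$ with $q$ columns, $\mathcal{R}(B)=\{B\circ x:x\in\mathbb{R}^q\}$ and $\mathcal{N}(B)=\{x\in\mathbb{R}^q:B\circ x=0\}$. A cone is a nonempty set closed under addition and under multiplication by nonnegative scalars. For $S$ a subset of $\mathbb{R}^p$ with weight $W$, the dual is $S^{[*]}=\{x\in\mathbb{R}^p:[x,t]\ge0\ \forall t\in S\}$. For a matrix $B$ and a set $S$, $B\circ S=\{B\circ s:s\in S\}$. The sum of sets is the Minkowski sum. A cone $L$ is acute if $[x,y]\ge0$ for all $x,y\in L$, equivalently $L\subseteq L^{[*]}$. The cone $C=A\circ I\circ K$ is called obtuse if $(A\circ I\circ K)^{[*]}\cap\mathcal{R}(A\circ I)$ is acute. *)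

theory Defs
  imports "HOL-Analysis.Analysis"
begin

text \<open>Matrices are HOL-Analysis matrices; a matrix in R^(p x q) has type real^'q^'p.
  Since the weight of R^p is determined by the space (not by the type index),
  every indefinite operation takes the relevant weight(s) explicitly.\<close>

definition weight :: "real^'p^'p \<Rightarrow> bool" where
  "weight W \<longleftrightarrow> transpose W = W \<and> W ** W = mat 1"

definition iprod :: "real^'p^'p \<Rightarrow> real^'p^'r \<Rightarrow> real^'s^'p \<Rightarrow> real^'s^'r" where
  "iprod W B C = B ** W ** C"

definition iprodv :: "real^'p^'p \<Rightarrow> real^'p^'r \<Rightarrow> real^'p \<Rightarrow> real^'r" where
  "iprodv W B x = B *v (W *v x)"

definition iinner :: "real^'p^'p \<Rightarrow> real^'p \<Rightarrow> real^'p \<Rightarrow> real" where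
  "iinner W x y = x \<bullet> (W *v y)"

definition iadj :: "real^'p^'p \<Rightarrow> real^'q^'q \<Rightarrow> real^'q^'p \<Rightarrow> real^'p^'q" where
  "iadj Wp Wq B = Wq ** transpose B ** Wp"

definition impinv :: "real^'p^'p \<Rightarrow> real^'q^'q \<Rightarrow> real^'q^'p \<Rightarrow> real^'p^'q" where
  "impinv Wp Wq B = (THE X.
      iprod Wp (iprod Wq B X) B = B \<and>
      iprod Wq (iprod Wp X B) X = X \<and>
      iadj Wp Wp (iprod Wq B X) = iprod Wq B X \<and>
      iadj Wq Wq (iprod Wp X B) = iprod Wp X B)"

definition irange :: "real^'q^'q \<Rightarrow> real^'q^'p \<Rightarrow> (real^'p) set" where
  "irange W B = {iprodv W B x | x. True}"

definition inull :: "real^'q^'q \<Rightarrow> real^'q^'p \<Rightarrow> (real^'q) set" where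
  "inull W B = {x. iprodv W B x = 0}"

definition icone :: "(real^'p) set \<Rightarrow> bool" where
  "icone S \<longleftrightarrow> S \<noteq> {} \<and> (\<forall>x\<in>S. \<forall>y\<in>S. x + y \<in> S) \<and> (\<forall>c\<ge>0. \<forall>x\<in>S. c *\<^sub>R x \<in> S)"

definition idual :: "real^'p^'p \<Rightarrow> (real^'p) set \<Rightarrow> (real^'p) set" where
  "idual W S = {x. \<forall>t\<in>S. iinner W x t \<ge> 0}"

definition iimage :: "real^'q^'q \<Rightarrow> real^'q^'p \<Rightarrow> (real^'q) set \<Rightarrow> (real^'p) set" where
  "iimage W B S = (\<lambda>s. iprodv W B s) ` S"

definition msum :: "('a::plus) set \<Rightarrow> 'a set \<Rightarrow> 'a set" where
  "msum S T = {s + t | s t. s \<in> S \<and> t \<in> T}"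

definition acute :: "real^'p^'p \<Rightarrow> (real^'p) set \<Rightarrow> bool" where
  "acute W L \<longleftrightarrow> (\<forall>x\<in>L. \<forall>y\<in>L. iinner W x y \<ge> 0)"

text \<open>C = A o I o K is obtuse iff (A o I o K)^[*] \<inter> R(A o I) is acute (all in R^m with weight M).\<close>
definition obtuse :: "real^'m^'m \<Rightarrow> real^'n^'n \<Rightarrow> real^'n^'m \<Rightarrow> (real^'n) set \<Rightarrow> bool" where
  "obtuse M N A K \<longleftrightarrow>
     acute M (idual M (iimage N (iprod N A (mat 1)) K) \<inter> irange N (iprod N A (mat 1)))"

end

theory Submission
  imports Defs
begin

lemma dot_tr: "(A *v x) \<bullet> y = x \<bullet> (transpose A *v (y::real^_))"
  by (metis dot_lmul_matrix inner_commute transpose_matrix_vector)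

lemma subspace_rng: "subspace (range (\<lambda>z. (A::real^_^_) *v z))"
  by (simp add: linear_subspace_image)

definition ismp :: "real^'q^'p \<Rightarrow> real^'p^'q \<Rightarrow> bool" where
  "ismp B X \<longleftrightarrow> B ** X ** B = B \<and> X ** B ** X = X \<and> transpose (B ** X) = B ** X \<and> transpose (X ** B) = X ** B"

lemma ismp_unique: assumes "ismp B X" "ismp B Y" shows "X = Y"
proof -
  from assms have a: "B ** X ** B = B" "X ** B ** X = X" "transpose (B ** X) = B ** X" "transpose (X ** B) = X ** B"
    and b: "B ** Y ** B = B" "Y ** B ** Y = Y" "transpose (B ** Y) = B ** Y" "transpose (Y ** B) = Y ** B"
    by (auto simp: ismp_def)
  have 1: "B ** X = B ** Y"
  proof -
    have "B ** X = transpose (B ** X)" using a by simp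
    also have "\<dots> = transpose ((B ** Y) ** (B ** X))" using b by (simp add: matrix_mul_assoc)
    also have "\<dots> = (B ** X) ** (B ** Y)" using a b by (simp add: matrix_transpose_mul)
    also have "\<dots> = B ** Y" using a by (simp add: matrix_mul_assoc)
    finally show ?thesis .
  qed
  have 2: "X ** B = Y ** B"
  proof -
    have "X ** B = transpose (X ** B)" using a by simp
    also have "\<dots> = transpose (X ** (B ** Y ** B))" using b by simp
    also have "\<dots> = transpose ((X ** B) ** (Y ** B))" by (simp add: matrix_mul_assoc)
    also have "\<dots> = (Y ** B) ** (X ** B)" using a b by (simp add: matrix_transpose_mul)
    also have "\<dots> = Y ** (B ** X ** B)" by (simp add: matrix_mul_assoc)
    also have "\<dots> = Y ** B" using a by simp
    finally show ?thesis .
  qed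
  have "X = (X ** B) ** X" using a by (simp add: matrix_mul_assoc)
  also have "\<dots> = Y ** (B ** Y)" using 1 2 by (metis matrix_mul_assoc)
  also have "\<dots> = Y" using b by (simp add: matrix_mul_assoc)
  finally show ?thesis .
qed

lemma proj_exists:
  fixes A :: "real^'n^'m" and y :: "real^'m"
  shows "\<exists>x. x \<in> range (\<lambda>z. transpose A *v z) \<and> (\<forall>w. (A *v x - y) \<bullet> (A *v w) = 0)"
proof -
  obtain y1 z where y1: "y1 \<in> span (range (\<lambda>w. A *v w))"
    and z: "\<And>w. w \<in> span (range (\<lambda>w. A *v w)) \<Longrightarrow> orthogonal z w" and yz: "y = y1 + z"
    using orthogonal_subspace_decomp_exists by blast
  have "y1 \<in> range (\<lambda>w. A *v w)" using y1 span_eq_iff subspace_rng by blast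
  then obtain x' where x': "y1 = A *v x'" by auto
  obtain x z' where x: "x \<in> span (range (\<lambda>z. transpose A *v z))"
    and z': "\<And>w. w \<in> span (range (\<lambda>z. transpose A *v z)) \<Longrightarrow> orthogonal z' w" and xz: "x' = x + z'"
    using orthogonal_subspace_decomp_exists by blast
  have "orthogonal z' (transpose A *v (A *v z'))" using z' span_base by blast
  then have "(A *v z') \<bullet> (A *v z') = 0" by (simp add: dot_tr orthogonal_def)
  then have Az: "A *v z' = 0" by simp
  have Ax: "A *v x = y1" using x' xz Az by (simp add: matrix_vector_right_distrib)
  have xr: "x \<in> range (\<lambda>z. transpose A *v z)" using x span_eq_iff subspace_rng by blast
  have "(A *v x - y) \<bullet> (A *v w) = 0" for w
  proof -
    have "orthogonal z (A *v w)" using z span_base by blast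
    then show ?thesis using Ax yz by (simp add: orthogonal_def)
  qed
  with xr show ?thesis by blast
qed

lemma proj_unique:
  fixes A :: "real^'n^'m" and y :: "real^'m"
  assumes "x1 \<in> range (\<lambda>z. transpose A *v z)" "\<forall>w. (A *v x1 - y) \<bullet> (A *v w) = 0"
    and "x2 \<in> range (\<lambda>z. transpose A *v z)" "\<forall>w. (A *v x2 - y) \<bullet> (A *v w) = 0"
  shows "x1 = x2"
proof -
  obtain z1 z2 where z: "x1 = transpose A *v z1" "x2 = transpose A *v z2" using assms by auto
  define d where "d = x1 - x2"
  have dz: "d = transpose A *v (z1 - z2)" using z by (simp add: d_def matrix_vector_mult_diff_distrib)
  have "(A *v d) \<bullet> (A *v w) = (A *v x1 - y) \<bullet> (A *v w) - (A *v x2 - y) \<bullet> (A *v w)" for w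
    by (simp add: d_def matrix_vector_mult_diff_distrib inner_diff_left)
  then have "(A *v d) \<bullet> (A *v d) = 0" using assms by simp
  then have Ad: "A *v d = 0" by simp
  have "d \<bullet> d = (z1 - z2) \<bullet> (A *v d)" using dz dot_tr[of "transpose A" "z1 - z2" d] by simp
  then have "d = 0" using Ad by simp
  then show ?thesis by (simp add: d_def)
qed

definition pf :: "real^'n^'m \<Rightarrow> real^'m \<Rightarrow> real^'n" where
  "pf A y = (SOME x. x \<in> range (\<lambda>z. transpose A *v z) \<and> (\<forall>w. (A *v x - y) \<bullet> (A *v w) = 0))"

lemma pf: "pf A y \<in> range (\<lambda>z. transpose A *v z) \<and> (\<forall>w. (A *v pf A y - y) \<bullet> (A *v w) = 0)"
  unfolding pf_def by (rule someI_ex, rule proj_exists)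

lemma pf_eq:
  assumes "x \<in> range (\<lambda>z. transpose A *v z)" "\<forall>w. (A *v x - y) \<bullet> (A *v w) = 0"
  shows "pf A y = x"
  using proj_unique[OF _ _ assms] pf by blast

lemma pf_linear: "linear (pf A)"
proof (rule linearI)
  fix b1 b2
  obtain u1 u2 where u: "pf A b1 = transpose A *v u1" "pf A b2 = transpose A *v u2" using pf by blast
  show "pf A (b1 + b2) = pf A b1 + pf A b2"
  proof (rule pf_eq)
    show "pf A b1 + pf A b2 \<in> range (\<lambda>z. transpose A *v z)"
      using u by (metis matrix_vector_right_distrib rangeI)
    show "\<forall>w. (A *v (pf A b1 + pf A b2) - (b1 + b2)) \<bullet> (A *v w) = 0"
    proof
      fix w
      have "(A *v (pf A b1 + pf A b2) - (b1 + b2)) \<bullet> (A *v w) = (A *v pf A b1 - b1) \<bullet> (A *v w) + (A *v pf A b2 - b2) \<bullet> (A *v w)"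
        by (simp add: matrix_vector_right_distrib inner_add_left inner_diff_left)
      then show "(A *v (pf A b1 + pf A b2) - (b1 + b2)) \<bullet> (A *v w) = 0" using pf[of A b1] pf[of A b2] by simp
    qed
  qed
next
  fix r b
  obtain u where u: "pf A b = transpose A *v u" using pf by blast
  show "pf A (r *\<^sub>R b) = r *\<^sub>R pf A b"
  proof (rule pf_eq)
    show "r *\<^sub>R pf A b \<in> range (\<lambda>z. transpose A *v z)"
      using u by (metis matrix_vector_mult_scaleR rangeI)
    show "\<forall>w. (A *v (r *\<^sub>R pf A b) - r *\<^sub>R b) \<bullet> (A *v w) = 0"
    proof
      fix w
      have "(A *v (r *\<^sub>R pf A b) - r *\<^sub>R b) \<bullet> (A *v w) = r * ((A *v pf A b - b) \<bullet> (A *v w))"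
        by (simp add: matrix_vector_mult_scaleR inner_diff_left algebra_simps)
      then show "(A *v (r *\<^sub>R pf A b) - r *\<^sub>R b) \<bullet> (A *v w) = 0" using pf[of A b] by simp
    qed
  qed
qed

lemma sym_matI:
  fixes S :: "real^'n^'n"
  assumes "\<And>x y. (S *v x) \<bullet> y = x \<bullet> (S *v y)"
  shows "transpose S = S"
proof -
  have "transpose S *v y = S *v y" for y
  proof -
    have "x \<bullet> (transpose S *v y - S *v y) = 0" for x
      using assms[of x y] dot_tr[of S x y] by (simp add: inner_diff_right)
    then show ?thesis by (metis eq_iff_diff_eq_0 inner_eq_zero_iff)
  qed
  then show ?thesis by (simp add: matrix_eq)
qed

lemma pinvm_apply: "matrix (pf A) *v y = pf A y"
  by (metis matrix_vector_mul(2)[OF pf_linear])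

lemma pf_A: "A *v pf A (A *v x) = A *v x"
proof -
  have "(A *v pf A (A *v x) - A *v x) \<bullet> (A *v (pf A (A *v x) - x)) = 0" using pf by blast
  then show ?thesis by (simp add: matrix_vector_mult_diff_distrib)
qed

lemma ismp_pf: "ismp A (matrix (pf A))"
proof -
  let ?X = "matrix (pf A)"
  have 1: "A ** ?X ** A = A"
    by (simp add: matrix_eq matrix_vector_mul_assoc[symmetric] pinvm_apply pf_A)
  have 2: "?X ** A ** ?X = ?X"
  proof -
    have "pf A (A *v pf A y) = pf A y" for y
      by (rule pf_eq) (use pf in auto)
    then show ?thesis by (simp add: matrix_eq matrix_vector_mul_assoc[symmetric] pinvm_apply)
  qed
  have 3: "transpose (A ** ?X) = A ** ?X"
  proof (rule sym_matI)
    fix x y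
    have a: "(A *v pf A x) \<bullet> y = (A *v pf A x) \<bullet> (A *v pf A y)" for x y
    proof -
      have "(A *v pf A y - y) \<bullet> (A *v pf A x) = 0" using pf by blast
      then have "(A *v pf A x) \<bullet> (A *v pf A y - y) = 0" by (simp add: inner_commute)
      then show ?thesis by (simp add: inner_diff_right)
    qed
    show "((A ** ?X) *v x) \<bullet> y = x \<bullet> ((A ** ?X) *v y)"
      using a[of x y] a[of y x] by (simp add: matrix_vector_mul_assoc[symmetric] pinvm_apply inner_commute)
  qed
  have 4: "transpose (?X ** A) = ?X ** A"
  proof (rule sym_matI)
    fix x y
    have a: "pf A (A *v x) \<bullet> y = pf A (A *v x) \<bullet> pf A (A *v y)" for x y
    proof -
      obtain u where u: "pf A (A *v x) = transpose A *v u" using pf by blast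
      have "pf A (A *v x) \<bullet> (y - pf A (A *v y)) = u \<bullet> (A *v (y - pf A (A *v y)))"
        using u dot_tr[of "transpose A" u] by simp
      also have "\<dots> = 0" by (simp add: matrix_vector_mult_diff_distrib pf_A)
      finally show ?thesis by (simp add: inner_diff_right)
    qed
    show "((?X ** A) *v x) \<bullet> y = x \<bullet> ((?X ** A) *v y)"
      using a[of x y] a[of y x] by (simp add: matrix_vector_mul_assoc[symmetric] pinvm_apply inner_commute)
  qed
  show ?thesis using 1 2 3 4 by (simp add: ismp_def)
qed

definition pinv :: "real^'q^'p \<Rightarrow> real^'p^'q" where
  "pinv B = (THE X. ismp B X)"

lemma ismp_pinv: "ismp B (pinv B)"
  unfolding pinv_def using theI[of "ismp B" "matrix (pf B)"] ismp_pf ismp_unique by blast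

lemma pinv_eq: "ismp B X \<Longrightarrow> pinv B = X"
  using ismp_unique ismp_pinv by blast

lemma weightD:
  assumes "weight W"
  shows "transpose W = W" "W ** W = mat 1" "X ** W ** W = X" "W *v (W *v v) = v"
  using assms by (auto simp: weight_def matrix_mul_assoc[symmetric] matrix_vector_mul_assoc)

lemma w_lmul: "weight W \<Longrightarrow> (W ** Y = Z) \<longleftrightarrow> (Y = W ** Z)"
  by (metis matrix_mul_assoc matrix_mul_lid weightD(2))

lemma w_rmul: "weight W \<Longrightarrow> (Y ** W = Z) \<longleftrightarrow> (Y = Z ** W)"
  by (metis weightD(3))

lemma w_conj: "weight V \<Longrightarrow> weight W \<Longrightarrow> (V ** Y ** W = V ** Z ** W) \<longleftrightarrow> (Y = Z)"
  by (metis w_lmul w_rmul)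

lemma impinv_eq:
  fixes Wp :: "real^'p^'p" and Wq :: "real^'q^'q" and B :: "real^'q^'p"
  assumes p: "weight Wp" and q: "weight Wq"
  shows "impinv Wp Wq B = Wq ** pinv B ** Wp"
proof -
  have eqv: "(iprod Wp (iprod Wq B X) B = B \<and>
      iprod Wq (iprod Wp X B) X = X \<and>
      iadj Wp Wp (iprod Wq B X) = iprod Wq B X \<and>
      iadj Wq Wq (iprod Wp X B) = iprod Wp X B) \<longleftrightarrow> ismp B (Wq ** X ** Wp)" for X
  proof -
    have c1: "iprod Wp (iprod Wq B X) B = B \<longleftrightarrow> B ** (Wq ** X ** Wp) ** B = B"
      by (simp add: iprod_def matrix_mul_assoc)
    have "Wq ** X ** Wp ** B ** (Wq ** X ** Wp) = Wq ** (X ** Wp ** B ** Wq ** X) ** Wp"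
      by (simp add: matrix_mul_assoc)
    then have c2: "iprod Wq (iprod Wp X B) X = X \<longleftrightarrow> Wq ** X ** Wp ** B ** (Wq ** X ** Wp) = Wq ** X ** Wp"
      using w_conj[OF q p] by (simp add: iprod_def)
    have e3: "iadj Wp Wp (iprod Wq B X) = (Wp ** transpose X ** Wq ** transpose B) ** Wp"
      "transpose (B ** (Wq ** X ** Wp)) = Wp ** transpose X ** Wq ** transpose B"
      "B ** (Wq ** X ** Wp) = (B ** Wq ** X) ** Wp"
      using p q by (simp_all add: iadj_def iprod_def matrix_transpose_mul matrix_mul_assoc weightD)
    have c3: "iadj Wp Wp (iprod Wq B X) = iprod Wq B X \<longleftrightarrow> transpose (B ** (Wq ** X ** Wp)) = B ** (Wq ** X ** Wp)"
    proof -
      have "iadj Wp Wp (iprod Wq B X) = iprod Wq B X \<longleftrightarrow> (Wp ** transpose X ** Wq ** transpose B) ** Wp = B ** Wq ** X"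
        unfolding e3(1) by (simp only: iprod_def)
      also have "\<dots> \<longleftrightarrow> Wp ** transpose X ** Wq ** transpose B = (B ** Wq ** X) ** Wp" by (rule w_rmul[OF p])
      also have "\<dots> \<longleftrightarrow> transpose (B ** (Wq ** X ** Wp)) = B ** (Wq ** X ** Wp)" unfolding e3(2) by (simp only: e3(3))
      finally show ?thesis .
    qed
    have e4: "iadj Wq Wq (iprod Wp X B) = Wq ** (transpose B ** Wp ** transpose X ** Wq)"
      "transpose (Wq ** X ** Wp ** B) = transpose B ** Wp ** transpose X ** Wq"
      "Wq ** X ** Wp ** B = Wq ** (X ** Wp ** B)"
      using p q by (simp_all add: iadj_def iprod_def matrix_transpose_mul matrix_mul_assoc weightD)
    have c4: "iadj Wq Wq (iprod Wp X B) = iprod Wp X B \<longleftrightarrow> transpose (Wq ** X ** Wp ** B) = Wq ** X ** Wp ** B"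
    proof -
      have "iadj Wq Wq (iprod Wp X B) = iprod Wp X B \<longleftrightarrow> Wq ** (transpose B ** Wp ** transpose X ** Wq) = X ** Wp ** B"
        unfolding e4(1) by (simp only: iprod_def)
      also have "\<dots> \<longleftrightarrow> transpose B ** Wp ** transpose X ** Wq = Wq ** (X ** Wp ** B)" by (rule w_lmul[OF q])
      also have "\<dots> \<longleftrightarrow> transpose (Wq ** X ** Wp ** B) = Wq ** X ** Wp ** B" unfolding e4(2) by (simp only: e4(3))
      finally show ?thesis .
    qed
    show ?thesis unfolding ismp_def c1 c2 c3 c4 by blast
  qed
  have "ismp B (Wq ** X ** Wp) \<longleftrightarrow> X = Wq ** pinv B ** Wp" for X
  proof -
    have "ismp B (Wq ** X ** Wp) \<longleftrightarrow> Wq ** X ** Wp = pinv B"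
      using pinv_eq ismp_pinv by metis
    also have "\<dots> \<longleftrightarrow> Wq ** X ** Wp = Wq ** (Wq ** pinv B ** Wp) ** Wp"
      using q p by (simp add: matrix_mul_assoc weightD)
    also have "\<dots> \<longleftrightarrow> X = Wq ** pinv B ** Wp" using w_conj[OF q p] by blast
    finally show ?thesis .
  qed
  with eqv show ?thesis unfolding impinv_def by simp
qed

lemma ismpD:
  assumes "ismp A B"
  shows "A ** B ** A = A" "B ** A ** B = B" "transpose B ** transpose A = A ** B" "transpose A ** transpose B = B ** A"
    "X1 ** A ** B ** A = X1 ** A" "X2 ** B ** A ** B = X2 ** B" "X3 ** transpose B ** transpose A = X3 ** A ** B"
    "X4 ** transpose A ** transpose B = X4 ** B ** A"
  using assms unfolding ismp_def
  by (auto simp: matrix_transpose_mul matrix_mul_assoc[symmetric])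

lemma weight_one: "weight (mat 1)"
  by (simp add: weight_def)

lemma pinv_conj:
  assumes V: "weight V" and W: "weight W"
  shows "pinv (V ** A ** W) = W ** pinv A ** V"
proof (rule pinv_eq)
  note a = ismpD[OF ismp_pinv[of A]]
  note v = weightD[OF V] and w = weightD[OF W]
  show "ismp (V ** A ** W) (W ** pinv A ** V)"
    unfolding ismp_def
    by (simp add: matrix_mul_assoc a v w matrix_transpose_mul)
qed

lemma pinv_lmul:
  assumes V: "weight V"
  shows "pinv (V ** A) = pinv A ** V"
  using pinv_conj[OF V weight_one, of A] by simp

lemma pinv_ata: "pinv (transpose A ** A) = pinv A ** transpose (pinv A)"
proof (rule pinv_eq)
  note a = ismpD[OF ismp_pinv[of A]]
  let ?B = "pinv A"
  have t1: "transpose ?B ** transpose A ** A = A" using a by (metis matrix_mul_assoc)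
  have t2: "transpose ?B ** ?B ** A = transpose ?B"
  proof -
    have "transpose (?B ** A ** ?B) = transpose ?B" using a by simp
    then have "transpose ?B ** (transpose A ** transpose ?B) = transpose ?B" by (simp add: matrix_transpose_mul matrix_mul_assoc)
    then show ?thesis using a by (simp add: matrix_mul_assoc)
  qed
  have t1x: "X ** transpose ?B ** transpose A ** A = X ** A" for X :: "real^_^_" using t1 by (metis matrix_mul_assoc)
  have t2x: "X ** transpose ?B ** ?B ** A = X ** transpose ?B" for X :: "real^_^_" using t2 by (metis matrix_mul_assoc)
  have t3: "transpose A ** A ** ?B ** transpose ?B = ?B ** A"
  proof -
    have "transpose A ** A ** ?B ** transpose ?B = transpose A ** (A ** ?B) ** transpose ?B" by (simp add: matrix_mul_assoc)
    also have "\<dots> = (transpose A ** transpose ?B) ** (transpose A ** transpose ?B)" using a(3) by (metis matrix_mul_assoc)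
    also have "\<dots> = ?B ** A ** ?B ** A" using a(4) by (simp add: matrix_mul_assoc)
    also have "\<dots> = ?B ** A" using a(2) by simp
    finally show ?thesis .
  qed
  have t3x: "X ** transpose A ** A ** ?B ** transpose ?B = X ** ?B ** A" for X :: "real^_^_" using t3 by (metis matrix_mul_assoc)
  have t4: "?B ** A ** transpose A = transpose A"
  proof -
    have "transpose (A ** ?B ** A) = transpose A" using a by simp
    then have "(transpose A ** transpose ?B) ** transpose A = transpose A" by (simp add: matrix_transpose_mul matrix_mul_assoc)
    then show ?thesis using a by simp
  qed
  have t4x: "X ** ?B ** A ** transpose A = X ** transpose A" for X :: "real^_^_" using t4 by (metis matrix_mul_assoc)
  show "ismp (transpose A ** A) (?B ** transpose ?B)"
    unfolding ismp_def
    by (simp add: matrix_mul_assoc a t1 t2 t1x t2x t3 t3x t4 t4x matrix_transpose_mul)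
qed

lemma icone_convex: "icone K \<Longrightarrow> convex K"
  unfolding icone_def convex_def by blast

lemma icone_zero: "icone K \<Longrightarrow> 0 \<in> K"
  unfolding icone_def by (metis all_not_in_conv order_refl scaleR_zero_left)

lemma w_inner: "weight N \<Longrightarrow> (N *v a) \<bullet> (N *v t) = a \<bullet> (t::real^_)"
  by (simp add: dot_tr weightD)

lemma dual_sep:
  fixes K :: "(real^'n) set" and N :: "real^'n^'n"
  assumes "closed K" "icone K" "weight N" "x \<notin> K"
  shows "\<exists>u \<in> idual N K. iinner N u x < 0"
proof -
  obtain a b where ab: "a \<bullet> x < b" "\<forall>y\<in>K. b < a \<bullet> y"
    using separating_hyperplane_closed_point[OF icone_convex[OF assms(2)] assms(1) assms(4)] by blast
  have b0: "b < 0" using ab icone_zero[OF assms(2)] by force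
  have pos: "a \<bullet> t \<ge> 0" if t: "t \<in> K" for t
  proof (rule ccontr)
    assume "\<not> a \<bullet> t \<ge> 0"
    then have neg: "a \<bullet> t < 0" by simp
    define c where "c = b / (a \<bullet> t)"
    have "c \<ge> 0" using neg b0 by (simp add: c_def divide_nonpos_neg)
    then have "c *\<^sub>R t \<in> K" using t assms(2) unfolding icone_def by blast
    then have "b < a \<bullet> (c *\<^sub>R t)" using ab by blast
    moreover have "a \<bullet> (c *\<^sub>R t) = b" using neg by (simp add: c_def)
    ultimately show False by simp
  qed
  let ?u = "N *v a"
  have "?u \<in> idual N K" unfolding idual_def iinner_def using pos w_inner[OF assms(3)] by simp
  moreover have "iinner N ?u x < 0" unfolding iinner_def using w_inner[OF assms(3)] ab b0 by simp
  ultimately show ?thesis by blast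
qed

lemma pinv_facts:
  fixes A :: "real^'n^'m"
  shows "transpose (pinv A) ** transpose A ** A = A"
    "transpose (pinv A) ** pinv A ** A = transpose (pinv A)"
    "transpose A ** A ** pinv A ** transpose (pinv A) = pinv A ** A"
    "pinv A ** A ** pinv A ** transpose (pinv A) = pinv A ** transpose (pinv A)"
    "transpose (pinv A ** A) = pinv A ** A"
proof -
  note a = ismpD[OF ismp_pinv[of A]]
  let ?B = "pinv A"
  show "transpose ?B ** transpose A ** A = A" using a by (metis matrix_mul_assoc)
  show "transpose ?B ** ?B ** A = transpose ?B"
  proof -
    have "transpose (?B ** A ** ?B) = transpose ?B" using a by simp
    then have "transpose ?B ** (transpose A ** transpose ?B) = transpose ?B" by (simp add: matrix_transpose_mul matrix_mul_assoc)
    then show ?thesis using a by (simp add: matrix_mul_assoc)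
  qed
  show "transpose A ** A ** ?B ** transpose ?B = ?B ** A"
  proof -
    have "transpose A ** A ** ?B ** transpose ?B = transpose A ** (A ** ?B) ** transpose ?B" by (simp add: matrix_mul_assoc)
    also have "\<dots> = (transpose A ** transpose ?B) ** (transpose A ** transpose ?B)" using a(3) by (metis matrix_mul_assoc)
    also have "\<dots> = ?B ** A ** ?B ** A" using a(4) by (simp add: matrix_mul_assoc)
    also have "\<dots> = ?B ** A" using a(2) by simp
    finally show ?thesis .
  qed
  show "?B ** A ** ?B ** transpose ?B = ?B ** transpose ?B" using a(2) by simp
  show "transpose (?B ** A) = ?B ** A" using ismp_pinv[of A] by (simp add: ismp_def)
qed

declare transpose_matrix_vector[simp del]

lemma core:
  fixes M :: "real^'m^'m" and N :: "real^'n^'n" and A :: "real^'n^'m" and K :: "(real^'n) set"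
  assumes wM: "weight M" and wN: "weight N" and MA: "M ** A = A ** N"
    and BM: "pinv A ** M = N ** pinv A"
    and cK: "closed K" and iK: "icone K"
    and PK: "\<And>t. t \<in> K \<Longrightarrow> (pinv A ** A) *v t \<in> K"
  shows "(acute M ((\<lambda>s. transpose (pinv A) *v s) ` idual N K) \<longleftrightarrow> (\<lambda>s. (pinv A ** transpose (pinv A)) *v s) ` idual N K \<subseteq> msum K {x. A *v x = 0})
    \<and> ((\<lambda>s. (pinv A ** transpose (pinv A)) *v s) ` idual N K \<subseteq> msum K {x. A *v x = 0} \<longleftrightarrow> acute M (idual M ((\<lambda>s. A *v s) ` K) \<inter> range (\<lambda>x. A *v x)))"
proof -
  define B where "B = pinv A"
  define G where "G = B ** transpose B"
  define P where "P = B ** A"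
  define C where "C = transpose A ** A"
  define KD where "KD = idual N K"
  note pf = pinv_facts[of A, folded B_def]
  have AtM: "transpose A ** M = N ** transpose A"
    using arg_cong[OF MA, of transpose] wM wN by (simp add: matrix_transpose_mul weightD)
  have v1: "iinner M (transpose B *v u) (transpose B *v v) = iinner N u (G *v v)" for u v
  proof -
    have "iinner M (transpose B *v u) (transpose B *v v) = u \<bullet> ((B ** M ** transpose B) *v v)"
      by (simp add: iinner_def dot_tr matrix_vector_mul_assoc matrix_mul_assoc)
    also have "\<dots> = u \<bullet> ((N ** G) *v v)" using BM by (simp add: B_def G_def matrix_mul_assoc)
    finally show ?thesis by (simp add: iinner_def matrix_vector_mul_assoc)
  qed
  have v8: "iinner M (A *v w) (A *v t) = iinner N (C *v w) t" for w t
  proof -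
    have "iinner M (A *v w) (A *v t) = w \<bullet> ((transpose A ** M ** A) *v t)"
      by (simp add: iinner_def dot_tr matrix_vector_mul_assoc matrix_mul_assoc)
    also have "\<dots> = w \<bullet> ((transpose A ** (A ** N)) *v t)" using MA by (metis matrix_mul_assoc)
    also have "\<dots> = iinner N (C *v w) t"
      by (simp add: iinner_def dot_tr C_def matrix_vector_mul_assoc matrix_transpose_mul matrix_mul_assoc)
    finally show ?thesis .
  qed
  have v3: "transpose B *v (C *v w) = A *v w" for w
    using pf(1) by (simp add: C_def matrix_vector_mul_assoc matrix_mul_assoc)
  have v4: "transpose B *v (P *v u) = transpose B *v u" for u
    using pf(2) by (simp add: P_def matrix_vector_mul_assoc matrix_mul_assoc)
  have v5: "C *v (G *v u) = P *v u" for u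
    using pf(3) by (simp add: C_def G_def P_def matrix_vector_mul_assoc matrix_mul_assoc)
  have v6: "P *v (G *v u) = G *v u" for u
    using pf(4) by (simp add: G_def P_def matrix_vector_mul_assoc matrix_mul_assoc)
  have v7: "P *v z = 0" if "A *v z = 0" for z
    using that by (simp add: P_def matrix_vector_mul_assoc[symmetric])
  have PN: "P ** N = N ** P"
  proof -
    have "P ** N = B ** (M ** A)" using MA by (simp add: P_def matrix_mul_assoc)
    also have "\<dots> = N ** P" using BM by (simp add: P_def B_def matrix_mul_assoc)
    finally show ?thesis .
  qed
  have v9: "P *v u \<in> KD" if "u \<in> KD" for u
  proof -
    have "iinner N (P *v u) t = iinner N u (P *v t)" for t
    proof -
      have "iinner N (P *v u) t = u \<bullet> ((transpose P ** N) *v t)"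
        by (simp add: iinner_def dot_tr matrix_vector_mul_assoc matrix_mul_assoc)
      also have "\<dots> = u \<bullet> ((N ** P) *v t)" using pf(5) PN by (simp add: P_def B_def)
      finally show ?thesis by (simp add: iinner_def matrix_vector_mul_assoc)
    qed
    then show ?thesis using that PK unfolding KD_def idual_def P_def B_def by auto
  qed
  have i_ii': "acute M ((\<lambda>s. transpose B *v s) ` KD) \<longleftrightarrow> (\<forall>v\<in>KD. G *v v \<in> K)"
  proof
    assume ac: "acute M ((\<lambda>s. transpose B *v s) ` KD)"
    show "\<forall>v\<in>KD. G *v v \<in> K"
    proof (rule ballI, rule ccontr)
      fix v assume v: "v \<in> KD" and nv: "G *v v \<notin> K"
      obtain u where u: "u \<in> KD" "iinner N u (G *v v) < 0"
        using dual_sep[OF cK iK wN nv] unfolding KD_def by blast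
      have "iinner M (transpose B *v u) (transpose B *v v) \<ge> 0"
        using ac u v unfolding acute_def by blast
      then show False using u v1 by simp
    qed
  next
    assume h: "\<forall>v\<in>KD. G *v v \<in> K"
    show "acute M ((\<lambda>s. transpose B *v s) ` KD)"
      unfolding acute_def
    proof (intro ballI)
      fix x y assume "x \<in> (\<lambda>s. transpose B *v s) ` KD" "y \<in> (\<lambda>s. transpose B *v s) ` KD"
      then obtain u v where uv: "u \<in> KD" "v \<in> KD" "x = transpose B *v u" "y = transpose B *v v" by blast
      have "G *v v \<in> K" using h uv by blast
      then have "iinner N u (G *v v) \<ge> 0" using uv unfolding KD_def idual_def by blast
      then show "iinner M x y \<ge> 0" using uv v1 by simp
    qed
  qed
  have ii_ii': "(\<lambda>s. G *v s) ` KD \<subseteq> msum K {x. A *v x = 0} \<longleftrightarrow> (\<forall>v\<in>KD. G *v v \<in> K)"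
  proof
    assume h: "(\<lambda>s. G *v s) ` KD \<subseteq> msum K {x. A *v x = 0}"
    show "\<forall>v\<in>KD. G *v v \<in> K"
    proof
      fix v assume "v \<in> KD"
      then obtain k z where kz: "k \<in> K" "A *v z = 0" "G *v v = k + z" using h unfolding msum_def by blast
      have "G *v v = P *v (G *v v)" using v6 by simp
      also have "\<dots> = P *v k" using kz v7 by (simp add: matrix_vector_right_distrib)
      finally show "G *v v \<in> K" using PK kz by (simp add: P_def B_def)
    qed
  next
    assume h: "\<forall>v\<in>KD. G *v v \<in> K"
    show "(\<lambda>s. G *v s) ` KD \<subseteq> msum K {x. A *v x = 0}"
      unfolding msum_def using h by force
  qed
  have i_iii: "acute M ((\<lambda>s. transpose B *v s) ` KD) \<longleftrightarrow> acute M (idual M ((\<lambda>s. A *v s) ` K) \<inter> range (\<lambda>x. A *v x))"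
  proof -
    have mem: "A *v w \<in> idual M ((\<lambda>s. A *v s) ` K) \<longleftrightarrow> C *v w \<in> KD" for w
      unfolding idual_def KD_def using v8 by auto
    show ?thesis
    proof
      assume ac: "acute M ((\<lambda>s. transpose B *v s) ` KD)"
      show "acute M (idual M ((\<lambda>s. A *v s) ` K) \<inter> range (\<lambda>x. A *v x))"
        unfolding acute_def
      proof (intro ballI)
        fix x y assume x: "x \<in> idual M ((\<lambda>s. A *v s) ` K) \<inter> range (\<lambda>x. A *v x)"
          and y: "y \<in> idual M ((\<lambda>s. A *v s) ` K) \<inter> range (\<lambda>x. A *v x)"
        obtain w w' where ww: "x = A *v w" "y = A *v w'" using x y by blast
        have "C *v w \<in> KD" "C *v w' \<in> KD" using mem x y ww by auto
        then have "iinner M (transpose B *v (C *v w)) (transpose B *v (C *v w')) \<ge> 0"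
          using ac unfolding acute_def by blast
        then show "iinner M x y \<ge> 0" using ww v3 by simp
      qed
    next
      assume ac: "acute M (idual M ((\<lambda>s. A *v s) ` K) \<inter> range (\<lambda>x. A *v x))"
      show "acute M ((\<lambda>s. transpose B *v s) ` KD)"
        unfolding acute_def
      proof (intro ballI)
        fix x y assume "x \<in> (\<lambda>s. transpose B *v s) ` KD" "y \<in> (\<lambda>s. transpose B *v s) ` KD"
        then obtain u v where uv: "u \<in> KD" "v \<in> KD" "x = transpose B *v u" "y = transpose B *v v" by blast
        have ex: "transpose B *v u = A *v (G *v u)" for u
          using v3[of "G *v u"] v4[of u] v5[of u] by simp
        have inS: "A *v (G *v u) \<in> idual M ((\<lambda>s. A *v s) ` K) \<inter> range (\<lambda>x. A *v x)" if "u \<in> KD" for u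
          using mem[of "G *v u"] v5[of u] v9[OF that] by simp
        have "iinner M (A *v (G *v u)) (A *v (G *v v)) \<ge> 0"
          using ac inS[OF uv(1)] inS[OF uv(2)] unfolding acute_def by blast
        then show "iinner M x y \<ge> 0" using uv ex by simp
      qed
    qed
  qed
  show ?thesis using i_ii' ii_ii' i_iii unfolding B_def G_def KD_def by simp
qed

lemma iimage_w: "weight W \<Longrightarrow> iimage W (Q ** W) S = (\<lambda>s. Q *v s) ` S"
  by (simp add: iimage_def iprodv_def matrix_vector_mul_assoc[symmetric] weightD matrix_mul_assoc[symmetric])

theorem theorem3p16:
  fixes M :: "real^'m^'m" and N :: "real^'n^'n" and A :: "real^'n^'m"
    and K :: "(real^'n) set"
  assumes "weight M" and "weight N"
    and "iprod M (mat 1) A = iprod N A (mat 1)"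
    and "closed (irange N (iprod N A (mat 1)))"
    and "closed K" and "icone K"
    and "iimage N (iprod M (impinv M N A) A) K \<subseteq> K"
  shows "(acute M (iimage N (iprod N (iadj N M (impinv M N A)) (mat 1)) (idual N K))
            \<longleftrightarrow> iimage N (impinv N N (iprod M (iadj M N A) A)) (idual N K)
                  \<subseteq> msum K (inull N (iprod N A (mat 1))))
       \<and> (iimage N (impinv N N (iprod M (iadj M N A) A)) (idual N K)
                  \<subseteq> msum K (inull N (iprod N A (mat 1)))
            \<longleftrightarrow> obtuse M N A K)"
proof -
  note wM = assms(1) and wN = assms(2)
  define B where "B = pinv A"
  define G where "G = B ** transpose B"
  have MA: "M ** A = A ** N" using assms(3) by (simp add: iprod_def)
  have X: "impinv M N A = N ** B ** M" using impinv_eq[OF wM wN] by (simp add: B_def)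
  have MAN: "M ** A ** N = A" using MA wN by (simp add: weightD)
  have B1: "B = N ** B ** M" using pinv_conj[OF wM wN, of A] MAN by (simp add: B_def)
  have BM: "B ** M = N ** B"
  proof -
    have "B ** M = N ** B ** M ** M" using B1 by simp
    also have "\<dots> = N ** B" using wM by (simp add: weightD)
    finally show ?thesis .
  qed
  have Bt: "transpose B = M ** transpose B ** N"
    using arg_cong[OF B1, of transpose] wM wN by (simp add: matrix_transpose_mul weightD matrix_mul_assoc)
  have NGN: "N ** G ** N = G"
  proof -
    have "G = (N ** B ** M) ** (M ** transpose B ** N)" unfolding G_def using B1 Bt by metis
    also have "\<dots> = N ** G ** N" using wM by (simp add: G_def matrix_mul_assoc weightD)
    finally show ?thesis by simp
  qed
  have s1: "iimage N (iprod N (iadj N M (impinv M N A)) (mat 1)) (idual N K) = (\<lambda>s. transpose B *v s) ` idual N K"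
  proof -
    have "iadj N M (impinv M N A) = transpose B"
      using wM wN by (simp add: X iadj_def matrix_transpose_mul weightD matrix_mul_assoc)
    then show ?thesis using iimage_w[OF wN] by (simp add: iprod_def)
  qed
  have s2: "iimage N (impinv N N (iprod M (iadj M N A) A)) (idual N K) = (\<lambda>s. G *v s) ` idual N K"
  proof -
    have "iprod M (iadj M N A) A = N ** (transpose A ** A)"
      using wM by (simp add: iprod_def iadj_def weightD matrix_mul_assoc)
    then have "impinv N N (iprod M (iadj M N A) A) = N ** pinv (N ** (transpose A ** A)) ** N"
      using impinv_eq[OF wN wN] by simp
    also have "\<dots> = N ** (pinv (transpose A ** A) ** N) ** N"
      using pinv_lmul[OF wN, of "transpose A ** A"] by metis
    also have "\<dots> = N ** G" using wN by (simp add: pinv_ata G_def B_def weightD matrix_mul_assoc)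
    also have "\<dots> = G ** N" using NGN wN by (metis matrix_mul_assoc weightD(2) matrix_mul_lid)
    finally show ?thesis using iimage_w[OF wN] by simp
  qed
  have s3: "inull N (iprod N A (mat 1)) = {x. A *v x = 0}"
    using wN by (simp add: inull_def iprod_def iprodv_def matrix_vector_mul_assoc weightD)
  have s4: "obtuse M N A K \<longleftrightarrow> acute M (idual M ((\<lambda>s. A *v s) ` K) \<inter> range (\<lambda>x. A *v x))"
  proof -
    have "irange N (A ** N) = range (\<lambda>x. A *v x)"
      using wN by (auto simp: irange_def iprodv_def matrix_vector_mul_assoc weightD)
    then show ?thesis unfolding obtuse_def by (simp add: iprod_def iimage_w[OF wN])
  qed
  have PK: "(B ** A) *v t \<in> K" if "t \<in> K" for t
  proof -
    have "iprod M (impinv M N A) A = (B ** A) ** N"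
    proof -
      have "iprod M (impinv M N A) A = N ** B ** A" using wM by (simp add: X iprod_def weightD matrix_mul_assoc)
      also have "\<dots> = B ** M ** A" using BM by simp
      also have "\<dots> = B ** A ** N" using MA by (metis matrix_mul_assoc)
      finally show ?thesis .
    qed
    then show ?thesis using assms(7) that by (auto simp: iimage_w[OF wN])
  qed
  have c: "(acute M ((\<lambda>s. transpose B *v s) ` idual N K) \<longleftrightarrow> (\<lambda>s. G *v s) ` idual N K \<subseteq> msum K {x. A *v x = 0})
    \<and> ((\<lambda>s. G *v s) ` idual N K \<subseteq> msum K {x. A *v x = 0} \<longleftrightarrow> acute M (idual M ((\<lambda>s. A *v s) ` K) \<inter> range (\<lambda>x. A *v x)))"
    using core[OF wM wN MA BM[unfolded B_def] assms(5) assms(6)] PK unfolding G_def B_def by blast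
  show ?thesis unfolding s1 s2 s3 s4 using c by blast
qed

end
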